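(* Let $p\in\mathcal P$ be such that $\mu(p^r)\le\mu(p)$. Then: (i) $D_{\mu(p)}(p)\cap D_{\mu(p^r)}(p^r)\subseteq\mathrm I(\Gamma_{\mu(p)}(p))$; in particular, if $\Gamma_{\mu(p)}(p)$ is connected, then $D_{\mu(p)}(p)\cap D_{\mu(p^r)}(p^r)=\varnothing$. (ii) If $|D_{\mu(p)}(p)|=1$ and $\Gamma_{\mu(p)}(p)$ is acyclic, then $D_{\mu(p)}(p)\cap D_{\mu(p^r)}(p^r)=\varnothing$.
   Context: Let $n,h\ge2$, $N=\{1,\dots,n\}$, $H=\{1,\dots,h\}$, $\mathcal P$ the set of $h$-tuples of linear orders on $N$, $p^r$ the profile obtained by reversing each order; $x>_{p_i}y$ means $x\neq y$ and $p_i$ ranks $x$ above $y$; for an integer $\mu\in(h/2,h]$, $x>^p_\mu y$ means $|\{i: x>_{p_i}y\}|\ge\mu$; $D_\mu(p)=\{x\in N: \forall y,\ |\{i: y>_{p_i}x\}|<\mu\}$; $\mu(p)=\min\{\mu\in\mathbb N\cap(h/2,h]: D_\mu(p)\ne\varnothing\}$. $\Gamma_\mu(p)$ is the directed graph $(N,\{(x,y): x>^p_\mu y\})$. For a directed graph, $\mathrm I$ is the set of isolated vertices (no arc in or out); connected means the underlying undirected graph is connected; acyclic means it contains no directed cycle (on $l\ge2$ distinct vertices) as a subgraph. *)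

theory Defs
  imports Main
begin

text \<open>A profile is a map from voter indices to relations on nat; voter i (for i in {1..h})
  has the linear order p i on {1..n}, where (x,y) in p i means that voter i ranks x
  weakly above y.\<close>

definition profile :: "nat \<Rightarrow> nat \<Rightarrow> (nat \<Rightarrow> nat rel) \<Rightarrow> bool" where
  "profile n h p \<longleftrightarrow> (\<forall>i\<in>{1..h}. linear_order_on {1..n} (p i))"

definition rev_prof :: "(nat \<Rightarrow> nat rel) \<Rightarrow> (nat \<Rightarrow> nat rel)" where
  "rev_prof p = (\<lambda>i. (p i)\<inverse>)"

definition prefers :: "(nat \<Rightarrow> nat rel) \<Rightarrow> nat \<Rightarrow> nat \<Rightarrow> nat \<Rightarrow> bool" where
  "prefers p i x y \<longleftrightarrow> x \<noteq> y \<and> (x, y) \<in> p i"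

definition cnt :: "nat \<Rightarrow> (nat \<Rightarrow> nat rel) \<Rightarrow> nat \<Rightarrow> nat \<Rightarrow> nat" where
  "cnt h p x y = card {i \<in> {1..h}. prefers p i x y}"

definition maj :: "nat \<Rightarrow> (nat \<Rightarrow> nat rel) \<Rightarrow> nat \<Rightarrow> nat \<Rightarrow> nat \<Rightarrow> bool" where
  "maj h p \<mu> x y \<longleftrightarrow> cnt h p x y \<ge> \<mu>"

definition Dset :: "nat \<Rightarrow> nat \<Rightarrow> nat \<Rightarrow> (nat \<Rightarrow> nat rel) \<Rightarrow> nat set" where
  "Dset n h \<mu> p = {x \<in> {1..n}. \<forall>y\<in>{1..n}. cnt h p y x < \<mu>}"

definition mu :: "nat \<Rightarrow> nat \<Rightarrow> (nat \<Rightarrow> nat rel) \<Rightarrow> nat" where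
  "mu n h p = (LEAST \<mu>. h < 2 * \<mu> \<and> \<mu> \<le> h \<and> Dset n h \<mu> p \<noteq> {})"

text \<open>Arc set of the directed graph Gamma_mu(p), whose vertex set is {1..n}.\<close>
definition Gamma :: "nat \<Rightarrow> nat \<Rightarrow> nat \<Rightarrow> (nat \<Rightarrow> nat rel) \<Rightarrow> nat rel" where
  "Gamma n h \<mu> p = {(x, y). x \<in> {1..n} \<and> y \<in> {1..n} \<and> maj h p \<mu> x y}"

definition isolated :: "'a set \<Rightarrow> 'a rel \<Rightarrow> 'a set" where
  "isolated V E = {x \<in> V. \<forall>y. (x, y) \<notin> E \<and> (y, x) \<notin> E}"

definition dconnected :: "'a set \<Rightarrow> 'a rel \<Rightarrow> bool" where
  "dconnected V E \<longleftrightarrow> (\<forall>x\<in>V. \<forall>y\<in>V. (x, y) \<in> (E \<union> E\<inverse>)\<^sup>*)"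

definition dacyclic :: "'a set \<Rightarrow> 'a rel \<Rightarrow> bool" where
  "dacyclic V E \<longleftrightarrow> \<not> (\<exists>xs. length xs \<ge> 2 \<and> distinct xs \<and> set xs \<subseteq> V \<and>
      (\<forall>k < length xs - 1. (xs ! k, xs ! Suc k) \<in> E) \<and> (last xs, hd xs) \<in> E)"

end

theory Submission
  imports Defs
begin

lemma cycle_from_trancl:
  assumes EV: "E \<subseteq> V \<times> V" and irr: "\<forall>v. (v,v) \<notin> E" and vv: "(v,v) \<in> E\<^sup>+"
  shows "\<exists>xs. length xs \<ge> 2 \<and> distinct xs \<and> set xs \<subseteq> V \<and>
      (\<forall>k < length xs - 1. (xs ! k, xs ! Suc k) \<in> E) \<and> (last xs, hd xs) \<in> E"
proof -
  define P where "P m = (m > 0 \<and> (\<exists>f::nat \<Rightarrow> 'a. f m = f 0 \<and> (\<forall>i<m. (f i, f (Suc i)) \<in> E)))" for m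
  from vv obtain m0 where "m0 > 0" "(v,v) \<in> E ^^ m0" using trancl_power by blast
  then obtain f0 where "f0 0 = v" "f0 m0 = v" "\<forall>i<m0. (f0 i, f0 (Suc i)) \<in> E"
    using relpow_fun_conv by metis
  hence "P m0" using \<open>m0 > 0\<close> unfolding P_def by auto
  define m where "m = (LEAST m. P m)"
  have Pm: "P m" unfolding m_def by (rule LeastI, fact)
  then obtain f where m0: "m > 0" and fm: "f m = f 0" and fe: "\<forall>i<m. (f i, f (Suc i)) \<in> E"
    unfolding P_def by blast
  have inj: "inj_on f {..<m}"
  proof (rule ccontr)
    assume "\<not> inj_on f {..<m}"
    then obtain a b where ab: "a < m" "b < m" "f a = f b" "a \<noteq> b"
      unfolding inj_on_def by auto
    define i where "i = min a b"
    define j where "j = max a b"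
    have ij: "i < j" "j < m" "f i = f j" using ab unfolding i_def j_def by (auto simp: min_def max_def)
    have "P (j - i)" unfolding P_def
    proof (intro conjI exI[of _ "\<lambda>k. f (i + k)"])
      show "0 < j - i" using ij by simp
      show "f (i + (j - i)) = f (i + 0)" using ij by simp
      show "\<forall>k<j - i. (f (i + k), f (i + Suc k)) \<in> E" using ij fe by auto
    qed
    moreover have "j - i < m" using ij by simp
    ultimately show False unfolding m_def using not_less_Least by blast
  qed
  have "m \<noteq> 1"
  proof
    assume m1: "m = 1"
    hence "(f 0, f 1) \<in> E" using fe by simp
    thus False using fm irr m1 by simp
  qed
  hence m2: "m \<ge> 2" using m0 by simp
  define xs where "xs = map f [0..<m]"
  have len: "length xs = m" unfolding xs_def by simp
  have nth: "\<And>k. k < m \<Longrightarrow> xs ! k = f k" unfolding xs_def by simp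
  have "distinct xs" unfolding xs_def using inj by (simp add: distinct_map atLeast0LessThan)
  moreover have "set xs \<subseteq> V" unfolding xs_def using fe EV by auto
  moreover have "\<forall>k < length xs - 1. (xs ! k, xs ! Suc k) \<in> E" using len nth fe by auto
  moreover have "(last xs, hd xs) \<in> E"
  proof -
    have "xs \<noteq> []" using len m0 by auto
    hence "last xs = f (m - 1)" "hd xs = f 0" using len nth m0
      by (auto simp: last_conv_nth hd_conv_nth)
    moreover have "m - 1 < m" using m0 by simp
    hence "(f (m - 1), f (Suc (m - 1))) \<in> E" using fe by blast
    moreover have "Suc (m - 1) = m" using m0 by simp
    ultimately show ?thesis using fm by simp
  qed
  ultimately show ?thesis using len m2 by blast
qed

lemma cnt_rev: "cnt h (rev_prof p) y x = cnt h p x y"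
  unfolding cnt_def prefers_def rev_prof_def by (rule arg_cong[where f=card]) auto

theorem lemma5:
  fixes n h :: nat and p :: "nat \<Rightarrow> nat rel"
  assumes "n \<ge> 2" and "h \<ge> 2" and "profile n h p"
    and "mu n h (rev_prof p) \<le> mu n h p"
  shows "Dset n h (mu n h p) p \<inter> Dset n h (mu n h (rev_prof p)) (rev_prof p)
           \<subseteq> isolated {1..n} (Gamma n h (mu n h p) p)
       \<and> (dconnected {1..n} (Gamma n h (mu n h p) p) \<longrightarrow>
           Dset n h (mu n h p) p \<inter> Dset n h (mu n h (rev_prof p)) (rev_prof p) = {})
       \<and> (card (Dset n h (mu n h p) p) = 1 \<and> dacyclic {1..n} (Gamma n h (mu n h p) p) \<longrightarrow>
           Dset n h (mu n h p) p \<inter> Dset n h (mu n h (rev_prof p)) (rev_prof p) = {})"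
proof -
  define \<mu> where "\<mu> = mu n h p"
  define \<nu> where "\<nu> = mu n h (rev_prof p)"
  define G where "G = Gamma n h \<mu> p"
  define I where "I = Dset n h \<mu> p \<inter> Dset n h \<nu> (rev_prof p)"
  have le: "\<nu> \<le> \<mu>" using assms(4) unfolding \<mu>_def \<nu>_def .
  have part1: "I \<subseteq> isolated {1..n} G"
  proof
    fix x assume "x \<in> I"
    hence x: "x \<in> {1..n}" "\<forall>y\<in>{1..n}. cnt h p y x < \<mu>" "\<forall>y\<in>{1..n}. cnt h p x y < \<nu>"
      unfolding I_def Dset_def by (auto simp: cnt_rev)
    show "x \<in> isolated {1..n} G"
      unfolding isolated_def G_def Gamma_def maj_def using x le by fastforce
  qed
  have part2: "dconnected {1..n} G \<longrightarrow> I = {}"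
  proof
    assume dc: "dconnected {1..n} G"
    show "I = {}"
    proof (rule ccontr)
      assume "I \<noteq> {}"
      then obtain x where xI: "x \<in> I" by blast
      hence xi: "x \<in> isolated {1..n} G" using part1 by blast
      hence xn: "x \<in> {1..n}" unfolding isolated_def by simp
      have "\<exists>y. y \<in> {1..n} \<and> y \<noteq> x" using assms(1) xn
      proof (cases "x = 1")
        case True then show ?thesis using assms(1) by (intro exI[of _ 2]) auto
      next
        case False then show ?thesis using xn by (intro exI[of _ 1]) auto
      qed
      then obtain y where y: "y \<in> {1..n}" "y \<noteq> x" by blast
      have "(x,y) \<in> (G \<union> G\<inverse>)\<^sup>*" using dc xn y unfolding dconnected_def by blast
      then obtain z where "(x,z) \<in> G \<union> G\<inverse>" using y(2)
        by (metis converse_rtranclE)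
      thus False using xi unfolding isolated_def by auto
    qed
  qed
  have part3: "card (Dset n h \<mu> p) = 1 \<and> dacyclic {1..n} G \<longrightarrow> I = {}"
  proof
    assume a: "card (Dset n h \<mu> p) = 1 \<and> dacyclic {1..n} G"
    show "I = {}"
    proof (rule ccontr)
      assume "I \<noteq> {}"
      then obtain x where xI: "x \<in> I" by blast
      hence xi: "x \<in> isolated {1..n} G" using part1 by blast
      hence xn: "x \<in> {1..n}" unfolding isolated_def by simp
      have xD: "x \<in> Dset n h \<mu> p" using xI unfolding I_def by blast
      hence "cnt h p x x < \<mu>" using xn unfolding Dset_def by blast
      hence mupos: "\<mu> > 0" by simp
      have irr: "\<forall>v. (v,v) \<notin> G"
        using mupos unfolding G_def Gamma_def maj_def cnt_def prefers_def by simp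
      have GV: "G \<subseteq> {1..n} \<times> {1..n}" unfolding G_def Gamma_def by auto
      have acyc: "acyclic G"
        unfolding acyclic_def
      proof
        fix v show "(v,v) \<notin> G\<^sup>+"
          using cycle_from_trancl[OF GV irr, of v] a unfolding dacyclic_def by blast
      qed
      have "finite G" using GV finite_subset by blast
      hence wf: "wf G" using acyc finite_acyclic_wf by blast
      have "\<exists>y. y \<in> {1..n} \<and> y \<noteq> x" using assms(1) xn
      proof (cases "x = 1")
        case True then show ?thesis using assms(1) by (intro exI[of _ 2]) auto
      next
        case False then show ?thesis using xn by (intro exI[of _ 1]) auto
      qed
      then obtain y where y: "y \<in> {1..n}" "y \<noteq> x" by blast
      then obtain z where z: "z \<in> {1..n} - {x}" "\<forall>w. (w,z) \<in> G \<longrightarrow> w \<notin> {1..n} - {x}"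
        using wf unfolding wf_eq_minimal by (metis DiffI singletonD)
      have "\<forall>w\<in>{1..n}. cnt h p w z < \<mu>"
      proof
        fix w assume w: "w \<in> {1..n}"
        have "(w,z) \<notin> G"
          using z xi w unfolding isolated_def by (cases "w = x") auto
        thus "cnt h p w z < \<mu>" using w z unfolding G_def Gamma_def maj_def by auto
      qed
      hence "z \<in> Dset n h \<mu> p" using z unfolding Dset_def by auto
      moreover have "finite (Dset n h \<mu> p)" unfolding Dset_def by simp
      ultimately have "z = x" using xD a by (metis card_1_singletonE singletonD)
      thus False using z by simp
    qed
  qed
  show ?thesis using part1 part2 part3 unfolding \<mu>_def \<nu>_def G_def I_def by blast
qed

end
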